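(* Let $X$ be as in the standing setting with skeleton $X_1,\dots,X_k$. Suppose $x\in X$ lies in no $\operatorname{span}X_l$ and $x\in\operatorname{pos}\{x_i,x_j\}$ with $x_i\in X_i$, $x_j\in X_j$, $i\ne j$. If $y\in X\setminus X_i$ lies in $\operatorname{span}X_i$, then the support $S_y$ of $y$ does not contain $x_i$.
   Context: Standing setting: $X\subset\mathbb R^n\setminus\{0\}$ is a finite set such that $0$ lies in the interior of $\operatorname{conv}X$, no element of $X$ is a positive multiple of another, and every $n+1$ points of $X$ are in good position. A finite set $A$ is in conical position if $0\notin\operatorname{conv}A$ and no point of $A$ lies in the positive hull (set of nonnegative linear combinations, denoted $\operatorname{pos}$) of the other points; it is in good position otherwise. A skeleton of $X$ is a collection of pairwise disjoint subsets $X_1,\dots,X_k\subseteq X$ such that each $X_i$ is the vertex set of a simplex whose relative interior contains $0$ and $\mathbb R^n=\operatorname{span}X_1\oplus\cdots\oplus\operatorname{span}X_k$. For a nonzero $y\in\operatorname{span}X_i$, its support $S_y$ is the minimal subset of $X_i$ whose positive hull contains $y$. *)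

theory Defs
  imports "HOL-Analysis.Analysis"
begin

definition pos :: "'a::real_vector set \<Rightarrow> 'a set" where
  "pos A = {(\<Sum>a\<in>A. c a *\<^sub>R a) | c. \<forall>a\<in>A. 0 \<le> c a}"

definition conical_position :: "'a::real_vector set \<Rightarrow> bool" where
  "conical_position A \<longleftrightarrow> 0 \<notin> convex hull A \<and> (\<forall>a\<in>A. a \<notin> pos (A - {a}))"

definition good_position :: "'a::real_vector set \<Rightarrow> bool" where
  "good_position A \<longleftrightarrow> \<not> conical_position A"

definition standing_setting :: "'a::euclidean_space set \<Rightarrow> bool" where
  "standing_setting X \<longleftrightarrow>
     finite X \<and> 0 \<notin> X \<and> 0 \<in> interior (convex hull X) \<and>
     (\<forall>x\<in>X. \<forall>y\<in>X. x \<noteq> y \<longrightarrow> \<not> (\<exists>c>0. y = c *\<^sub>R x)) \<and>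
     (\<forall>A. A \<subseteq> X \<and> card A = DIM('a) + 1 \<longrightarrow> good_position A)"

definition direct_sum_decomposition :: "nat \<Rightarrow> (nat \<Rightarrow> 'a::real_vector set) \<Rightarrow> bool" where
  "direct_sum_decomposition k V \<longleftrightarrow>
     (\<forall>v. \<exists>!u. (\<forall>i<k. u i \<in> V i) \<and> (\<forall>i. k \<le> i \<longrightarrow> u i = 0) \<and> v = (\<Sum>i<k. u i))"

text \<open>A skeleton X_0,...,X_(k-1) of X (indexed by i < k).\<close>
definition skeleton :: "'a::euclidean_space set \<Rightarrow> nat \<Rightarrow> (nat \<Rightarrow> 'a set) \<Rightarrow> bool" where
  "skeleton X k Xs \<longleftrightarrow>
     (\<forall>i<k. Xs i \<subseteq> X) \<and>
     (\<forall>i<k. \<forall>j<k. i \<noteq> j \<longrightarrow> Xs i \<inter> Xs j = {}) \<and>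
     (\<forall>i<k. \<not> affine_dependent (Xs i) \<and> 0 \<in> rel_interior (convex hull (Xs i))) \<and>
     direct_sum_decomposition k (\<lambda>i. span (Xs i))"

definition is_support :: "'a::real_vector set \<Rightarrow> 'a \<Rightarrow> 'a set \<Rightarrow> bool" where
  "is_support Xi y S \<longleftrightarrow> S \<subseteq> Xi \<and> y \<in> pos S \<and> (\<forall>T. T \<subset> S \<longrightarrow> y \<notin> pos T)"

end

theory Submission
  imports Defs
begin

lemma span_full:
  fixes X :: "'a::euclidean_space set"
  assumes "0 \<in> interior (convex hull X)"
  shows "span X = UNIV"
proof (rule ccontr)
  assume "span X \<noteq> UNIV"
  then obtain a :: 'a where a: "a \<noteq> 0" "\<forall>x\<in>span X. a \<bullet> x = 0"
    using span_not_UNIV_orthogonal by blast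
  obtain e where e: "e > 0" "ball 0 e \<subseteq> convex hull X"
    using assms mem_interior by blast
  define v where "v = (e / 2 / norm a) *\<^sub>R a"
  have "norm v = e / 2" using a e by (simp add: v_def)
  then have "v \<in> ball 0 e" using e by simp
  then have "v \<in> span X" using e convex_hull_subset_span by blast
  then have "a \<bullet> v = 0" using a by blast
  moreover have "a \<bullet> v = (e / 2 / norm a) * (a \<bullet> a)" by (simp add: v_def)
  moreover have "a \<bullet> a > 0" using a by simp
  ultimately show False using e a by simp
qed

lemma direct_sum_zero:
  assumes "direct_sum_decomposition k V" "i < k" "j < k" "i \<noteq> j"
    "v \<in> V i" "v \<in> V j" "\<forall>l. 0 \<in> V l"
  shows "v = 0"
proof -
  define P where "P = (\<lambda>u. (\<forall>l<k. u l \<in> V l) \<and> (\<forall>l. k \<le> l \<longrightarrow> u l = 0) \<and> v = (\<Sum>l<k. u l))"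
  define u1 where "u1 = (\<lambda>l. if l = i then v else 0)"
  define u2 where "u2 = (\<lambda>l. if l = j then v else 0)"
  have ex: "\<exists>!u. P u"
    unfolding P_def using assms(1)[unfolded direct_sum_decomposition_def, rule_format, of v] .
  have h1: "P u1"
    using assms unfolding u1_def P_def by (auto simp: sum.delta)
  have h2: "P u2"
    using assms unfolding u2_def P_def by (auto simp: sum.delta)
  have "u1 = u2" using ex h1 h2 by (auto elim!: ex1E)
  then have "u1 i = u2 i" by simp
  then show ?thesis using assms(4) unfolding u1_def u2_def by simp
qed

lemma support_pos_coeffs:
  assumes "finite S" "y = (\<Sum>t\<in>S. mu t *\<^sub>R t)" "\<forall>t\<in>S. 0 \<le> mu t"
    "\<forall>T. T \<subset> S \<longrightarrow> y \<notin> pos T"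
  shows "\<forall>t\<in>S. 0 < mu t"
proof (rule ccontr)
  assume "\<not> (\<forall>t\<in>S. 0 < mu t)"
  then obtain t where t: "t \<in> S" "mu t = 0" using assms(3) by force
  have "y = (\<Sum>s\<in>S - {t}. mu s *\<^sub>R s)"
    using assms(1,2) t by (simp add: sum.remove)
  then have "y \<in> pos (S - {t})" unfolding pos_def using assms(3) by auto
  moreover have "S - {t} \<subset> S" using t by auto
  ultimately show False using assms(4) by blast
qed

lemma support_indep:
  assumes "finite S" "y = (\<Sum>t\<in>S. mu t *\<^sub>R t)" "\<forall>t\<in>S. 0 < mu t"
    "\<forall>T. T \<subset> S \<longrightarrow> y \<notin> pos T"
  shows "independent S"
proof (rule ccontr)
  assume "\<not> independent S"
  then obtain u0 v where u0: "v \<in> S" "u0 v \<noteq> 0" "(\<Sum>t\<in>S. u0 t *\<^sub>R t) = 0"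
    using dependent_finite[OF assms(1)] by blast
  define u where "u = (if u0 v > 0 then u0 else (\<lambda>t. - u0 t))"
  have uv: "u v > 0" using u0 by (auto simp: u_def)
  have usum: "(\<Sum>t\<in>S. u t *\<^sub>R t) = 0"
    using u0 by (auto simp: u_def sum_negf)
  define P where "P = {t\<in>S. u t > 0}"
  have P: "finite P" "P \<noteq> {}" using assms(1) uv u0 by (auto simp: P_def)
  define th where "th = Min ((\<lambda>t. mu t / u t) ` P)"
  have "th \<in> (\<lambda>t. mu t / u t) ` P"
    unfolding th_def using P by (intro Min_in) auto
  then obtain t0 where t0: "t0 \<in> P" "th = mu t0 / u t0" by blast
  have thle: "\<And>t. t \<in> P \<Longrightarrow> th \<le> mu t / u t"
    unfolding th_def using P by simp
  have thpos: "th > 0" using t0 assms(3) by (simp add: P_def)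
  define nu where "nu = (\<lambda>t. mu t - th * u t)"
  have nunn: "\<forall>t\<in>S. 0 \<le> nu t"
  proof
    fix t assume tS: "t \<in> S"
    show "0 \<le> nu t"
    proof (cases "u t > 0")
      case True
      then have "th \<le> mu t / u t" using thle tS by (simp add: P_def)
      then have "th * u t \<le> mu t" using True by (simp add: field_simps)
      then show ?thesis by (simp add: nu_def)
    next
      case False
      then have "th * u t \<le> 0" using thpos by (simp add: mult_nonneg_nonpos)
      then show ?thesis using assms(3) tS by (simp add: nu_def) (smt (verit))
    qed
  qed
  have nu0: "nu t0 = 0" using t0 by (simp add: nu_def P_def)
  have "(\<Sum>t\<in>S. nu t *\<^sub>R t) = (\<Sum>t\<in>S. mu t *\<^sub>R t) - th *\<^sub>R (\<Sum>t\<in>S. u t *\<^sub>R t)"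
    by (simp add: nu_def scaleR_diff_left sum_subtractf scaleR_sum_right)
  then have "y = (\<Sum>t\<in>S. nu t *\<^sub>R t)" using usum assms(2) by simp
  also have "\<dots> = (\<Sum>t\<in>S - {t0}. nu t *\<^sub>R t)"
  proof -
    have "t0 \<in> S" using t0 by (simp add: P_def)
    show ?thesis unfolding sum.remove[OF assms(1) \<open>t0 \<in> S\<close>] using nu0 by simp
  qed
  finally have "y \<in> pos (S - {t0})" unfolding pos_def using nunn by auto
  moreover have "S - {t0} \<subset> S" using t0 by (auto simp: P_def)
  ultimately show False using assms(4) by blast
qed

lemma indep_unique:
  fixes B :: "'a::euclidean_space set"
  assumes "independent B" "(\<Sum>t\<in>B. f t *\<^sub>R t) = (\<Sum>t\<in>B. g t *\<^sub>R t)"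
  shows "\<forall>t\<in>B. f t = g t"
proof -
  have ie: "\<forall>c. (\<Sum>v\<in>B. c v *\<^sub>R v) = 0 \<longrightarrow> (\<forall>v \<in> B. c v = 0)"
    using independent_explicit[THEN iffD1, OF assms(1)] by (rule conjunct2)
  have "(\<Sum>t\<in>B. (f t - g t) *\<^sub>R t) = 0"
    using assms(2) by (simp add: scaleR_diff_left sum_subtractf)
  then have "\<forall>t\<in>B. f t - g t = 0" using ie[rule_format, of "\<lambda>t. f t - g t"] by blast
  then show ?thesis by simp
qed

lemma aux_zero:
  fixes p q r :: real
  assumes "p \<ge> 0" "q \<ge> 0" "r > 0" "p * r + q = 0"
  shows "p = 0"
proof -
  have "p * r \<ge> 0" using assms by simp
  then have "p * r = 0" using assms by linarith
  then show ?thesis using assms(3) by simp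
qed

theorem proposition5p4:
  fixes X :: "'a::euclidean_space set" and Xs :: "nat \<Rightarrow> 'a set"
    and k i j :: nat and x xi xj y :: 'a and S :: "'a set"
  assumes "standing_setting X"
    and "skeleton X k Xs"
    and "x \<in> X"
    and "\<forall>l<k. x \<notin> span (Xs l)"
    and "i < k" and "j < k" and "i \<noteq> j"
    and "xi \<in> Xs i" and "xj \<in> Xs j"
    and "x \<in> pos {xi, xj}"
    and "y \<in> X - Xs i"
    and "y \<in> span (Xs i)"
    and "is_support (Xs i) y S"
  shows "xi \<notin> S"
proof
  assume xiS: "xi \<in> S"
  have finX: "finite X" and X0: "0 \<notin> X" and int0: "0 \<in> interior (convex hull X)"
    and nomult: "\<forall>x\<in>X. \<forall>y\<in>X. x \<noteq> y \<longrightarrow> \<not> (\<exists>c>0. y = c *\<^sub>R x)"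
    and good: "\<forall>A. A \<subseteq> X \<and> card A = DIM('a) + 1 \<longrightarrow> good_position A"
    using assms(1) unfolding standing_setting_def by auto
  have XsX: "\<forall>l<k. Xs l \<subseteq> X" and disj: "\<forall>l<k. \<forall>m<k. l \<noteq> m \<longrightarrow> Xs l \<inter> Xs m = {}"
    and ds: "direct_sum_decomposition k (\<lambda>l. span (Xs l))"
    using assms(2) unfolding skeleton_def by auto
  have ij0: "\<And>v. v \<in> span (Xs i) \<Longrightarrow> v \<in> span (Xs j) \<Longrightarrow> v = 0"
    using direct_sum_zero[OF ds assms(5,6,7)] by (simp add: span_zero)
  have xiX: "xi \<in> X" using XsX assms(5,8) by blast
  have xjX: "xj \<in> X" using XsX assms(6,9) by blast
  have xixj: "xi \<noteq> xj" using disj assms(5-9) by blast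
  have xnotsi: "x \<notin> span (Xs i)" and xnotsj: "x \<notin> span (Xs j)" using assms(4-6) by auto
  obtain cc where cc: "x = (\<Sum>t\<in>{xi,xj}. cc t *\<^sub>R t)" "\<forall>t\<in>{xi,xj}. 0 \<le> cc t"
    using assms(10) unfolding pos_def by blast
  define a where "a = cc xi"
  define b where "b = cc xj"
  have xab: "x = a *\<^sub>R xi + b *\<^sub>R xj" using cc xixj by (simp add: a_def b_def)
  have "a \<noteq> 0"
  proof
    assume "a = 0"
    then have "x = b *\<^sub>R xj" using xab by simp
    then have "x \<in> span (Xs j)" using assms(9) by (simp add: span_base span_mul)
    then show False using xnotsj by simp
  qed
  then have apos: "a > 0" using cc by (simp add: a_def)
  have "b \<noteq> 0"
  proof
    assume "b = 0"
    then have "x = a *\<^sub>R xi" using xab by simp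
    then have "x \<in> span (Xs i)" using assms(8) by (simp add: span_base span_mul)
    then show False using xnotsi by simp
  qed
  then have bpos: "b > 0" using cc by (simp add: b_def)
  have SXi: "S \<subseteq> Xs i" and ypS: "y \<in> pos S" and minS: "\<forall>T. T \<subset> S \<longrightarrow> y \<notin> pos T"
    using assms(13) unfolding is_support_def by auto
  have XiX: "Xs i \<subseteq> X" using XsX assms(5) by blast
  have finS: "finite S" using finite_subset[OF _ finX] SXi XiX by (meson order_trans)
  obtain mu0 where mu0: "y = (\<Sum>t\<in>S. mu0 t *\<^sub>R t)" "\<forall>t\<in>S. 0 \<le> mu0 t"
    using ypS unfolding pos_def by blast
  have mupos: "\<forall>t\<in>S. 0 < mu0 t" using support_pos_coeffs[OF finS mu0 minS] .
  have indS: "independent S" using support_indep[OF finS mu0(1) mupos minS] .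
  define S' where "S' = S - {xi}"
  have yS': "y = mu0 xi *\<^sub>R xi + (\<Sum>t\<in>S'. mu0 t *\<^sub>R t)"
    using mu0(1) unfolding S'_def sum.remove[OF finS xiS] .
  have S'ne: "S' \<noteq> {}"
  proof
    assume "S' = {}"
    then have "y = mu0 xi *\<^sub>R xi" using yS' by simp
    moreover have "y \<noteq> xi" using assms(8,11) by auto
    moreover have "y \<in> X" using assms(11) by simp
    moreover have "\<exists>c>0. y = c *\<^sub>R xi" using mupos xiS \<open>y = mu0 xi *\<^sub>R xi\<close> by auto
    ultimately show False using nomult[rule_format, OF xiX \<open>y \<in> X\<close>] by auto
  qed
  have S'sub: "S' \<subseteq> Xs i" using SXi S'_def by auto
  have xS': "x \<notin> S'" using S'sub xnotsi span_base[of x "Xs i"] by auto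
  have xjS': "xj \<notin> S'" using S'sub disj assms(5-9) by blast
  have xxj: "x \<noteq> xj" using xnotsj assms(9) span_base[of xj "Xs j"] by auto
  have spS': "span S' \<subseteq> span (Xs i)" using S'sub by (rule span_mono)
  define L where "L = insert x (insert xj S')"
  have indS': "independent S'" using independent_mono[OF indS] S'_def by auto
  have xj_nsp: "xj \<notin> span S'"
  proof
    assume "xj \<in> span S'"
    then have "xj = 0" using ij0 spS' assms(9) span_base[of xj "Xs j"] by auto
    then show False using xjX X0 by simp
  qed
  have x_nsp: "x \<notin> span (insert xj S')"
  proof
    assume "x \<in> span (insert xj S')"
    then obtain r where r: "x - r *\<^sub>R xj \<in> span S'" using span_breakdown_eq by blast
    define s where "s = x - r *\<^sub>R xj"
    have eq: "a *\<^sub>R xi - s = (r - b) *\<^sub>R xj" using xab by (simp add: s_def algebra_simps)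
    have "a *\<^sub>R xi - s \<in> span (Xs i)"
      using r spS' assms(8) unfolding s_def
      by (meson span_base span_diff span_mul subsetD)
    moreover have "(r - b) *\<^sub>R xj \<in> span (Xs j)" using assms(9) by (simp add: span_base span_mul)
    ultimately have "a *\<^sub>R xi - s = 0" using ij0[of "a *\<^sub>R xi - s"] eq by simp
    then have "s = a *\<^sub>R xi" by simp
    then have "xi = (1 / a) *\<^sub>R s" using \<open>a \<noteq> 0\<close> by simp
    then have "xi \<in> span S'" using r unfolding s_def by (simp add: span_mul)
    then have "dependent S" using xiS unfolding dependent_def S'_def by blast
    then show False using indS by simp
  qed
  have indL: "independent L" unfolding L_def
    using indS' xj_nsp x_nsp by (simp add: independent_insertI)
  have LX: "L \<subseteq> X" unfolding L_def using assms(3) xjX S'sub XiX by auto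
  obtain B where B: "L \<subseteq> B" "B \<subseteq> X" "independent B" "X \<subseteq> span B"
    using maximal_independent_subset_extend[OF LX indL] by blast
  have finB: "finite B" using finite_subset[OF B(2) finX] .
  have spanB: "span B = UNIV"
    using span_full[OF int0] span_mono[OF B(4)] by (simp add: span_span top.extremum_unique)
  have cardB: "card B = DIM('a)"
    using dim_eq_card_independent[OF B(3)] dim_span[of B] spanB by simp
  define c where "c = (\<lambda>t. if t = x then mu0 xi / a else if t = xj then - (mu0 xi * b / a)
                           else if t \<in> S' then mu0 t else 0)"
  have cx: "c x > 0" using apos mupos xiS by (simp add: c_def)
  have cxj: "c xj < 0" using apos bpos mupos xiS xxj by (simp add: c_def)
  have cS': "\<And>t. t \<in> S' \<Longrightarrow> c t > 0" using xS' xjS' mupos by (auto simp: c_def S'_def)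
  have xB: "x \<in> B" and xjB: "xj \<in> B" and S'B: "S' \<subseteq> B" using B(1) L_def by auto
  have ysum: "y = (\<Sum>t\<in>B. c t *\<^sub>R t)"
  proof -
    have "(\<Sum>t\<in>B. c t *\<^sub>R t) = (\<Sum>t\<in>L. c t *\<^sub>R t)"
      using finB B(1) by (intro sum.mono_neutral_right) (auto simp: L_def c_def)
    also have "\<dots> = c x *\<^sub>R x + c xj *\<^sub>R xj + (\<Sum>t\<in>S'. c t *\<^sub>R t)"
      unfolding L_def using finS xS' xjS' xxj by (simp add: S'_def add.assoc)
    also have "(\<Sum>t\<in>S'. c t *\<^sub>R t) = (\<Sum>t\<in>S'. mu0 t *\<^sub>R t)"
      using xS' xjS' by (intro sum.cong) (auto simp: c_def)
    also have "c x *\<^sub>R x + c xj *\<^sub>R xj = mu0 xi *\<^sub>R xi"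
    proof -
      have "c x = mu0 xi / a" "c xj = - (mu0 xi * b / a)" using xxj by (auto simp: c_def)
      then have "c x *\<^sub>R x + c xj *\<^sub>R xj
          = (mu0 xi / a) *\<^sub>R (a *\<^sub>R xi + b *\<^sub>R xj) - (mu0 xi * b / a) *\<^sub>R xj"
        using xab by simp
      also have "\<dots> = mu0 xi *\<^sub>R xi" using apos by (simp add: algebra_simps)
      finally show ?thesis .
    qed
    finally show ?thesis using yS' by simp
  qed
  have uniq: "\<And>f g. (\<Sum>t\<in>B. f t *\<^sub>R t) = (\<Sum>t\<in>B. g t *\<^sub>R t) \<Longrightarrow> \<forall>t\<in>B. f t = g t"
    using indep_unique[OF B(3)] by blast
  have delta: "\<And>z. z \<in> B \<Longrightarrow> z = (\<Sum>t\<in>B. (if t = z then 1 else 0) *\<^sub>R t)"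
  proof -
    fix z assume zB: "z \<in> B"
    have "(\<Sum>t\<in>B. (if t = z then 1 else 0) *\<^sub>R t) = (\<Sum>t\<in>B. if t = z then t else 0)"
      by (rule sum.cong) auto
    also have "\<dots> = z" using finB zB by (simp add: sum.delta)
    finally show "z = (\<Sum>t\<in>B. (if t = z then 1 else 0) *\<^sub>R t)" by simp
  qed
  have yB: "y \<notin> B"
  proof
    assume "y \<in> B"
    then have "(\<Sum>t\<in>B. c t *\<^sub>R t) = (\<Sum>t\<in>B. (if t = y then 1 else 0) *\<^sub>R t)"
      using delta ysum by simp
    then have "\<forall>t\<in>B. c t = (if t = y then 1 else 0)" by (rule uniq)
    then have "c xj = (if xj = y then 1 else 0)" using xjB by blast
    then show False using cxj by (simp split: if_splits)
  qed
  define A where "A = insert y B"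
  have AX: "A \<subseteq> X" using A_def B(2) assms(11) by auto
  have cardA: "card A = DIM('a) + 1" using A_def finB yB cardB by simp
  have comb: "\<And>w g. w *\<^sub>R y + (\<Sum>t\<in>B. g t *\<^sub>R t) = (\<Sum>t\<in>B. (w * c t + g t) *\<^sub>R t)"
    unfolding ysum by (simp add: scaleR_sum_right sum.distrib scaleR_add_left)
  have "conical_position A"
    unfolding conical_position_def
  proof
    show "0 \<notin> convex hull A"
    proof
      assume "0 \<in> convex hull A"
      then obtain w where w: "\<forall>t\<in>A. 0 \<le> w t" "sum w A = 1" "(\<Sum>t\<in>A. w t *\<^sub>R t) = 0"
        using convex_hull_finite[of A] finB A_def by auto
      have "(\<Sum>t\<in>B. (w y * c t + w t) *\<^sub>R t) = (\<Sum>t\<in>B. 0 *\<^sub>R t)"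
        using w(3) comb[of "w y" w] finB yB unfolding A_def by simp
      then have z: "\<forall>t\<in>B. w y * c t + w t = 0" by (rule uniq)
      have "w y * c x + w x = 0" using z xB by blast
      moreover have "w y \<ge> 0" "w x \<ge> 0" using w(1) xB A_def by auto
      ultimately have wy: "w y = 0" using cx aux_zero by blast
      then have "\<forall>t\<in>B. w t = 0" using z by simp
      then have "sum w A = 0" using wy finB yB A_def by simp
      then show False using w(2) by simp
    qed
  next
    show "\<forall>z\<in>A. z \<notin> pos (A - {z})"
    proof
      fix z assume zA: "z \<in> A"
      show "z \<notin> pos (A - {z})"
      proof
        assume zp: "z \<in> pos (A - {z})"
        show False
        proof (cases "z = y")
          case True
          then have "A - {z} = B" using A_def yB by auto
          then obtain d where d: "y = (\<Sum>t\<in>B. d t *\<^sub>R t)" "\<forall>t\<in>B. 0 \<le> d t"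
            using zp True unfolding pos_def by auto
          then have "(\<Sum>t\<in>B. c t *\<^sub>R t) = (\<Sum>t\<in>B. d t *\<^sub>R t)" using ysum by simp
          then have "\<forall>t\<in>B. c t = d t" by (rule uniq)
          then show False using d(2) xjB cxj by fastforce
        next
          case False
          then have zB: "z \<in> B" using zA A_def by auto
          have AB: "A - {z} = insert y (B - {z})" using A_def False by auto
          obtain w where w: "z = (\<Sum>t\<in>A - {z}. w t *\<^sub>R t)" "\<forall>t\<in>A - {z}. 0 \<le> w t"
            using zp unfolding pos_def by auto
          define g where "g = (\<lambda>t. if t = z then 0 else w t)"
          have "(\<Sum>t\<in>B - {z}. w t *\<^sub>R t) = (\<Sum>t\<in>B. g t *\<^sub>R t)"
            unfolding sum.remove[OF finB zB] g_def
            by (auto intro!: sum.cong)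
          then have "z = w y *\<^sub>R y + (\<Sum>t\<in>B. g t *\<^sub>R t)"
            using w(1) AB finB yB by simp
          then have "(\<Sum>t\<in>B. (w y * c t + g t) *\<^sub>R t) = (\<Sum>t\<in>B. (if t = z then 1 else 0) *\<^sub>R t)"
            using comb[of "w y" g] delta[OF zB] by simp
          then have e: "\<forall>t\<in>B. w y * c t + g t = (if t = z then 1 else 0)" by (rule uniq)
          have wy0: "w y \<ge> 0" using w(2) AB by auto
          have gnn: "\<forall>t\<in>B. g t \<ge> 0" using w(2) AB by (auto simp: g_def)
          obtain t where t: "t \<in> B" "t \<noteq> z" "c t > 0"
          proof (cases "z = x")
            case True
            obtain t where "t \<in> S'" using S'ne by blast
            then show ?thesis using that[of t] S'B cS' xS' True by blast
          next
            case False
            then show ?thesis using that[of x] xB cx by blast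
          qed
          have "w y * c t + g t = 0" using e t by simp
          moreover have "g t \<ge> 0" using gnn t(1) by blast
          ultimately have "w y = 0" using t(3) wy0 aux_zero by blast
          then have "g z = 1" using e zB by simp
          then show False by (simp add: g_def)
        qed
      qed
    qed
  qed
  then show False using good AX cardA unfolding good_position_def by blast
qed

end
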